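(* Let $\Omega=[0,1]^d$ and let $f^s,f^t:\Omega\to\mathbb{R}$ (source and target objective functions, to be minimized) be Lipschitz continuous with a common constant $K^*>0$ with respect to the Chebyshev distance. For $\epsilon>0$, let $B^1,\dots,B^{N_B}$ be a partition of $\Omega$ into neighborhoods, each contained in the closed Chebyshev ball of radius $\epsilon/K^*$ around its center $\boldsymbol{x}_c^i$, and let $f^s_\epsilon(\boldsymbol{x})=\sum_i\mathbf{1}_{B^i}(\boldsymbol{x})f^s(\boldsymbol{x}_c^i)$ and $f^t_\epsilon(\boldsymbol{x})=\sum_i\mathbf{1}_{B^i}(\boldsymbol{x})f^t(\boldsymbol{x}_c^i)$. Suppose that for every $\epsilon>0$ the Spearman rank correlation between $(f^s(\boldsymbol{x}_c^i))_{i}$ and $(f^t(\boldsymbol{x}_c^i))_{i}$ equals $1$. Then transferring a globally converged source solution makes the target converge to its global optimum immediately: for every $\epsilon>0$, if $\boldsymbol{x}^s_{\min}$ is a minimizer of $f^s_\epsilon$ (the best source solution found by a globally convergent surrogate-assisted search on $f^s_\epsilon$) and $\boldsymbol{x}^t_*$ is a global minimizer of $f^t$, then $|f^t(\boldsymbol{x}^t_* )-f^t(\boldsymbol{x}^s_{\min})|\le 4\epsilon$; in particular, for every $\xi>0$, choosing $\epsilon\le\xi/4$ gives $|f^t(\boldsymbol{x}^t_* )-f^t(\boldsymbol{x}^s_{\min})|\le\xi$.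
   Context: The Spearman rank correlation of two vectors is the Pearson correlation of their rank vectors; a value of $1$ means the rankings coincide. $f_\epsilon$ as defined is an $\epsilon$-optimal approximation, i.e. $|f-f_\epsilon|\le\epsilon$ on $\Omega$. *)

theory Defs
  imports "HOL-Analysis.Analysis"
begin

definition unit_cube :: "(real ^ 'd::finite) set" where
  "unit_cube = {x. \<forall>i. 0 \<le> x $ i \<and> x $ i \<le> 1}"

definition cheb_dist :: "real ^ 'd::finite \<Rightarrow> real ^ 'd \<Rightarrow> real" where
  "cheb_dist x y = Max (range (\<lambda>i. \<bar>x $ i - y $ i\<bar>))"

definition cheb_cball :: "real ^ 'd::finite \<Rightarrow> real \<Rightarrow> (real ^ 'd) set" where
  "cheb_cball c r = {x. cheb_dist x c \<le> r}"

definition cheb_lipschitz_on :: "(real ^ 'd::finite) set \<Rightarrow> real \<Rightarrow> (real ^ 'd \<Rightarrow> real) \<Rightarrow> bool" where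
  "cheb_lipschitz_on S K f \<longleftrightarrow> (\<forall>x\<in>S. \<forall>y\<in>S. \<bar>f x - f y\<bar> \<le> K * cheb_dist x y)"

text \<open>Ranks of the entries v 0, ..., v (n-1) (ascending, ties receive the average rank).\<close>
definition rank_vec :: "nat \<Rightarrow> (nat \<Rightarrow> real) \<Rightarrow> nat \<Rightarrow> real" where
  "rank_vec n v i = real (card {j. j < n \<and> v j < v i})
       + (real (card {j. j < n \<and> v j = v i}) + 1) / 2"

definition mean_vec :: "nat \<Rightarrow> (nat \<Rightarrow> real) \<Rightarrow> real" where
  "mean_vec n v = (\<Sum>i<n. v i) / real n"

definition pearson :: "nat \<Rightarrow> (nat \<Rightarrow> real) \<Rightarrow> (nat \<Rightarrow> real) \<Rightarrow> real" where
  "pearson n u v =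
     (\<Sum>i<n. (u i - mean_vec n u) * (v i - mean_vec n v)) /
     sqrt ((\<Sum>i<n. (u i - mean_vec n u)^2) * (\<Sum>i<n. (v i - mean_vec n v)^2))"

definition spearman :: "nat \<Rightarrow> (nat \<Rightarrow> real) \<Rightarrow> (nat \<Rightarrow> real) \<Rightarrow> real" where
  "spearman n u v = pearson n (rank_vec n u) (rank_vec n v)"

definition piecewise_approx ::
  "nat \<Rightarrow> (nat \<Rightarrow> (real ^ 'd::finite) set) \<Rightarrow> (nat \<Rightarrow> real ^ 'd) \<Rightarrow> (real ^ 'd \<Rightarrow> real) \<Rightarrow> real ^ 'd \<Rightarrow> real" where
  "piecewise_approx N B c f x = (\<Sum>i<N. indicator (B i) x * f (c i))"

end

theory Submission
  imports Defs
begin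



lemma rank_less:
  assumes "i < n" "j < n" "v j < (v i::real)"
  shows "rank_vec n v j < rank_vec n v i"
proof -
  let ?A = "{k. k < n \<and> v k < v j}" and ?E = "{k. k < n \<and> v k = v j}"
  let ?A' = "{k. k < n \<and> v k < v i}" and ?E' = "{k. k < n \<and> v k = v i}"
  have sub: "?A \<union> ?E \<subseteq> ?A'" using assms by auto
  have "card (?A \<union> ?E) = card ?A + card ?E" by (rule card_Un_disjoint) auto
  moreover have "card (?A \<union> ?E) \<le> card ?A'" by (rule card_mono[OF _ sub]) auto
  moreover have "card ?E \<ge> 1"
  proof -
    have "j \<in> ?E" using assms by auto
    then have "?E \<noteq> {}" by blast
    then show ?thesis by (simp add: Suc_le_eq card_gt_0_iff)
  qed
  ultimately have h: "real (card ?A) + real (card ?E) \<le> real (card ?A')" "real (card ?E) \<ge> 1"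
    by linarith+
  have "real (card ?E') \<ge> 0" by simp
  then show ?thesis unfolding rank_vec_def using h by (simp add: field_simps)
qed

lemma rank_le:
  assumes "i < n" "j < n" "v i \<le> (v j::real)"
  shows "rank_vec n v i \<le> rank_vec n v j"
proof (cases "v i = v j")
  case True then show ?thesis by (simp add: rank_vec_def)
next
  case False then show ?thesis using rank_less[of j n i v] assms by simp
qed

lemma pearson_one:
  assumes "pearson n u v = 1"
  shows "\<exists>k>0. \<forall>i<n. v i - mean_vec n v = k * (u i - mean_vec n u)"
proof -
  define U where "U i = u i - mean_vec n u" for i
  define V where "V i = v i - mean_vec n v" for i
  define a where "a = (\<Sum>i<n. (U i)^2)"
  define b where "b = (\<Sum>i<n. (V i)^2)"
  define p where "p = (\<Sum>i<n. U i * V i)"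
  have e: "p / sqrt (a * b) = 1" using assms unfolding pearson_def p_def a_def b_def U_def V_def .
  have a0: "a \<ge> 0" "b \<ge> 0" unfolding a_def b_def by (auto intro: sum_nonneg)
  have nz: "sqrt (a*b) \<noteq> 0" using e by auto
  then have ap: "a > 0" "b > 0" using a0 by auto
  have pe: "p = sqrt a * sqrt b" using e nz by (simp add: real_sqrt_mult field_simps)
  have sq: "(sqrt b * U i - sqrt a * V i)^2 = b * (U i)^2 - 2 * (sqrt a * sqrt b) * (U i * V i) + a * (V i)^2" for i
    unfolding power2_diff power_mult_distrib real_sqrt_pow2[OF a0(1)] real_sqrt_pow2[OF a0(2)]
    by (simp add: algebra_simps)
  have "(\<Sum>i<n. (sqrt b * U i - sqrt a * V i)^2) = (\<Sum>i<n. b * (U i)^2 - 2 * (sqrt a * sqrt b) * (U i * V i) + a * (V i)^2)"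
    using sq by simp
  also have "\<dots> = b * a - 2 * (sqrt a * sqrt b) * p + a * b"
    unfolding a_def b_def p_def by (simp add: sum.distrib sum_subtractf sum_distrib_left)
  also have "\<dots> = 0" using pe a0 by (simp add: algebra_simps flip: real_sqrt_mult)
  finally have "\<forall>i\<in>{..<n}. (sqrt b * U i - sqrt a * V i)^2 = 0"
    by (subst sum_nonneg_eq_0_iff[symmetric]) auto
  then have "\<forall>i<n. V i = (sqrt b / sqrt a) * U i" using ap by (auto simp: field_simps)
  moreover have "sqrt b / sqrt a > 0" using ap by simp
  ultimately show ?thesis unfolding U_def V_def by blast
qed

theorem mainTheorem4:
  fixes fs ft :: "real ^ 'd::finite \<Rightarrow> real"
    and K :: real
    and NB :: "real \<Rightarrow> nat"
    and B :: "real \<Rightarrow> nat \<Rightarrow> (real ^ 'd) set"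
    and c :: "real \<Rightarrow> nat \<Rightarrow> real ^ 'd"
  assumes K_pos: "K > 0"
    and lip_s: "cheb_lipschitz_on unit_cube K fs"
    and lip_t: "cheb_lipschitz_on unit_cube K ft"
    and part_cover: "\<And>\<epsilon>. \<epsilon> > 0 \<Longrightarrow> (\<Union>i<NB \<epsilon>. B \<epsilon> i) = unit_cube"
    and part_disj: "\<And>\<epsilon> i j. \<epsilon> > 0 \<Longrightarrow> i < NB \<epsilon> \<Longrightarrow> j < NB \<epsilon> \<Longrightarrow> i \<noteq> j \<Longrightarrow> B \<epsilon> i \<inter> B \<epsilon> j = {}"
    and part_nonempty: "\<And>\<epsilon> i. \<epsilon> > 0 \<Longrightarrow> i < NB \<epsilon> \<Longrightarrow> B \<epsilon> i \<noteq> {}"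
    and center_in: "\<And>\<epsilon> i. \<epsilon> > 0 \<Longrightarrow> i < NB \<epsilon> \<Longrightarrow> c \<epsilon> i \<in> unit_cube"
    and cell_small: "\<And>\<epsilon> i. \<epsilon> > 0 \<Longrightarrow> i < NB \<epsilon> \<Longrightarrow> B \<epsilon> i \<subseteq> cheb_cball (c \<epsilon> i) (\<epsilon> / K)"
    and spearman_one: "\<And>\<epsilon>. \<epsilon> > 0 \<Longrightarrow>
          spearman (NB \<epsilon>) (\<lambda>i. fs (c \<epsilon> i)) (\<lambda>i. ft (c \<epsilon> i)) = 1"
  shows "(\<forall>\<epsilon> > 0. \<forall>xs_min xt_star.
            xs_min \<in> unit_cube
            \<and> (\<forall>y\<in>unit_cube. piecewise_approx (NB \<epsilon>) (B \<epsilon>) (c \<epsilon>) fs xs_min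
                                \<le> piecewise_approx (NB \<epsilon>) (B \<epsilon>) (c \<epsilon>) fs y)
            \<and> xt_star \<in> unit_cube \<and> (\<forall>y\<in>unit_cube. ft xt_star \<le> ft y)
            \<longrightarrow> \<bar>ft xt_star - ft xs_min\<bar> \<le> 4 * \<epsilon>)
         \<and> (\<forall>\<xi> > 0. \<forall>\<epsilon>. 0 < \<epsilon> \<and> \<epsilon> \<le> \<xi> / 4 \<longrightarrow> (\<forall>xs_min xt_star.
            xs_min \<in> unit_cube
            \<and> (\<forall>y\<in>unit_cube. piecewise_approx (NB \<epsilon>) (B \<epsilon>) (c \<epsilon>) fs xs_min
                                \<le> piecewise_approx (NB \<epsilon>) (B \<epsilon>) (c \<epsilon>) fs y)
            \<and> xt_star \<in> unit_cube \<and> (\<forall>y\<in>unit_cube. ft xt_star \<le> ft y)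
            \<longrightarrow> \<bar>ft xt_star - ft xs_min\<bar> \<le> \<xi>))"
  proof -
  have core: "\<bar>ft xt - ft xs\<bar> \<le> 2 * \<epsilon>"
    if ep: "\<epsilon> > 0" and xs: "xs \<in> unit_cube"
      and xsmin: "\<forall>y\<in>unit_cube. piecewise_approx (NB \<epsilon>) (B \<epsilon>) (c \<epsilon>) fs xs
                                \<le> piecewise_approx (NB \<epsilon>) (B \<epsilon>) (c \<epsilon>) fs y"
      and xt: "xt \<in> unit_cube" and xtmin: "\<forall>y\<in>unit_cube. ft xt \<le> ft y" for \<epsilon> xs xt
  proof -
    let ?n = "NB \<epsilon>"
    have pw: "piecewise_approx ?n (B \<epsilon>) (c \<epsilon>) g x = g (c \<epsilon> i)"
      if "i < ?n" "x \<in> B \<epsilon> i" for g x i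
    proof -
      have "piecewise_approx ?n (B \<epsilon>) (c \<epsilon>) g x = indicator (B \<epsilon> i) x * g (c \<epsilon> i)
         + (\<Sum>j\<in>{..<?n}-{i}. indicator (B \<epsilon> j) x * g (c \<epsilon> j))"
        unfolding piecewise_approx_def by (rule sum.remove) (use that in auto)
      also have "(\<Sum>j\<in>{..<?n}-{i}. indicator (B \<epsilon> j) x * g (c \<epsilon> j)) = 0"
      proof (rule sum.neutral, rule ballI)
        fix j assume "j \<in> {..<?n}-{i}"
        then have "x \<notin> B \<epsilon> j" using part_disj[OF ep that(1), of j] that by auto
        then show "indicator (B \<epsilon> j) x * g (c \<epsilon> j) = 0" by simp
      qed
      finally show ?thesis using that by simp
    qed
    obtain i where i: "i < ?n" "xs \<in> B \<epsilon> i" using part_cover[OF ep] xs by blast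
    obtain j where j: "j < ?n" "xt \<in> B \<epsilon> j" using part_cover[OF ep] xt by blast
    have close: "\<bar>ft x - ft (c \<epsilon> k)\<bar> \<le> \<epsilon>" if "k < ?n" "x \<in> B \<epsilon> k" for x k
    proof -
      have xu: "x \<in> unit_cube" using part_cover[OF ep] that by blast
      have "cheb_dist x (c \<epsilon> k) \<le> \<epsilon> / K" using cell_small[OF ep that(1)] that(2)
        unfolding cheb_cball_def by blast
      then have "K * cheb_dist x (c \<epsilon> k) \<le> \<epsilon>" using K_pos by (simp add: field_simps)
      moreover have "\<bar>ft x - ft (c \<epsilon> k)\<bar> \<le> K * cheb_dist x (c \<epsilon> k)"
        using lip_t xu center_in[OF ep that(1)] unfolding cheb_lipschitz_on_def by blast
      ultimately show ?thesis by linarith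
    qed
    have fsle: "fs (c \<epsilon> i) \<le> fs (c \<epsilon> k)" if kn: "k < ?n" for k
    proof -
      obtain y where y: "y \<in> B \<epsilon> k" using part_nonempty[OF ep kn] by blast
      have "y \<in> unit_cube" using part_cover[OF ep] kn y by blast
      then show ?thesis using xsmin pw[OF i(1) i(2)] pw[OF kn y] by force
    qed
    obtain k where k: "k > 0" and kk: "\<forall>m<?n. rank_vec ?n (\<lambda>m. ft (c \<epsilon> m)) m - mean_vec ?n (rank_vec ?n (\<lambda>m. ft (c \<epsilon> m)))
       = k * (rank_vec ?n (\<lambda>m. fs (c \<epsilon> m)) m - mean_vec ?n (rank_vec ?n (\<lambda>m. fs (c \<epsilon> m))))"
      using pearson_one[OF spearman_one[OF ep, unfolded spearman_def]] by blast
    have ftle: "ft (c \<epsilon> i) \<le> ft (c \<epsilon> j)"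
    proof (rule ccontr)
      assume "\<not> ?thesis"
      then have "rank_vec ?n (\<lambda>m. ft (c \<epsilon> m)) j < rank_vec ?n (\<lambda>m. ft (c \<epsilon> m)) i"
        using rank_less[of i ?n j "\<lambda>m. ft (c \<epsilon> m)"] i j by simp
      then have "k * rank_vec ?n (\<lambda>m. fs (c \<epsilon> m)) j < k * rank_vec ?n (\<lambda>m. fs (c \<epsilon> m)) i"
        using kk i(1) j(1) by (smt (verit) right_diff_distrib)
      then have "rank_vec ?n (\<lambda>m. fs (c \<epsilon> m)) j < rank_vec ?n (\<lambda>m. fs (c \<epsilon> m)) i"
        using k by simp
      moreover have "rank_vec ?n (\<lambda>m. fs (c \<epsilon> m)) i \<le> rank_vec ?n (\<lambda>m. fs (c \<epsilon> m)) j"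
        using rank_le[of i ?n j "\<lambda>m. fs (c \<epsilon> m)"] i j fsle by simp
      ultimately show False by simp
    qed
    have "ft xt \<le> ft xs" using xtmin xs by blast
    moreover have "ft xs \<le> ft xt + 2 * \<epsilon>" using close[OF i] close[OF j] ftle by linarith
    ultimately show ?thesis by linarith
  qed
  show ?thesis
  proof (intro conjI allI impI)
    fix \<epsilon> xs xt assume "\<epsilon> > 0" and h: "xs \<in> unit_cube
            \<and> (\<forall>y\<in>unit_cube. piecewise_approx (NB \<epsilon>) (B \<epsilon>) (c \<epsilon>) fs xs
                                \<le> piecewise_approx (NB \<epsilon>) (B \<epsilon>) (c \<epsilon>) fs y)
            \<and> xt \<in> unit_cube \<and> (\<forall>y\<in>unit_cube. ft xt \<le> ft y)"
    then show "\<bar>ft xt - ft xs\<bar> \<le> 4 * \<epsilon>" using core[of \<epsilon> xs xt] by auto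
  next
    fix \<xi> \<epsilon> xs xt assume "\<xi> > 0" "0 < \<epsilon> \<and> \<epsilon> \<le> \<xi> / 4" and h: "xs \<in> unit_cube
            \<and> (\<forall>y\<in>unit_cube. piecewise_approx (NB \<epsilon>) (B \<epsilon>) (c \<epsilon>) fs xs
                                \<le> piecewise_approx (NB \<epsilon>) (B \<epsilon>) (c \<epsilon>) fs y)
            \<and> xt \<in> unit_cube \<and> (\<forall>y\<in>unit_cube. ft xt \<le> ft y)"
    then show "\<bar>ft xt - ft xs\<bar> \<le> \<xi>" using core[of \<epsilon> xs xt] by auto
  qed
qed

end
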